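(* Let $\Gamma$ be a finite connected $(G,3)$-geodesic-transitive graph of girth $4$ or $5$, with $G\le\mathrm{Aut}(\Gamma)$. Suppose that $G$ has a normal subgroup $N$ whose orbits on $V(\Gamma)$ all have size $m\ge2$, such that $\Gamma_N\cong K_{r,r}$ with $r\ge3$ and $\Gamma$ is a cover of $\Gamma_N$. Then $\Gamma$ is bipartite with girth $4$ and diameter at least $4$, and one of the following holds: (1) $m=2$ and $\Gamma$ is a Hadamard graph of valency $r$; (2) $\Gamma$ is a $G$-distance-transitive antipodal graph $mK_{r,r}$ which is the incidence graph of a resolvable divisible design $RGD(r,c_2,m)$, where $r=mc_2$, such that any two blocks from different parallel classes contain exactly $c_2$ common points; $\Gamma$ has intersection array $(r,r-1,r-c_2,1;1,c_2,r-1,r)$, and $c_2\ge2$, $m\ge3$; (3) $\Gamma$ is not $(G,4)$-distance-transitive.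
   Context: An $s$-geodesic is a path $(v_0,\dots,v_s)$ with $d(v_0,v_s)=s$; $\Gamma$ is $(G,s)$-geodesic-transitive if it has an $s$-geodesic and $G$ is transitive on $i$-geodesics for each $i\le s$; $(G,s)$-distance-transitive if for each $i\le s$, $G$ is transitive on ordered pairs at distance $i$, and $G$-distance-transitive if this holds for $s=\mathrm{diam}(\Gamma)$. $\Gamma_N$ has the $N$-orbits as vertices, distinct orbits adjacent iff some edge joins them; $\Gamma$ is a cover of $\Gamma_N$ if each vertex of an orbit $B$ has exactly one neighbour in each orbit adjacent to $B$. $c_2$ is the number of common neighbours of two vertices at distance $2$. A Hadamard graph of valency $2\mu$ is a distance-regular graph with intersection array $(2\mu,2\mu-1,\mu,1;1,\mu,2\mu-1,2\mu)$. A graph of diameter $d$ is antipodal if "distance $0$ or $d$" is an equivalence relation; $mK_{r,r}$ denotes an antipodal $m$-fold cover of $K_{r,r}$. A divisible design $GD(k,\lambda,n,kn)$ is $(X,\mathcal P,\mathcal B)$: $|X|=kn$, $\mathcal P$ a partition of $X$ into classes of size $n$, $\mathcal B$ a collection of $k$-subsets (blocks) each meeting every class in one point, any two points in different classes lying in exactly $\lambda$ blocks; it is resolvable, $RGD(k,\lambda,n)$, if $\mathcal B$ is partitioned into parallel classes (each a partition of $X$). The incidence graph has vertex set $X\cup\mathcal B$ with $x\sim B$ iff $x\in B$. The intersection array $(b_0,\dots,b_{d-1};c_1,\dots,c_d)$ of a distance-regular graph lists, for $v$ at distance $i$ from $u$, the numbers $b_i$ of neighbours of $v$ at distance $i+1$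 and $c_i$ at distance $i-1$ from $u$. *)

theory Defs
  imports Main
begin

definition simple_graph :: "'a set \<Rightarrow> ('a \<Rightarrow> 'a \<Rightarrow> bool) \<Rightarrow> bool" where
  "simple_graph V E \<longleftrightarrow> finite V \<and> (\<forall>x y. E x y \<longrightarrow> x \<in> V \<and> y \<in> V) \<and>
     (\<forall>x y. E x y \<longrightarrow> E y x) \<and> (\<forall>x. \<not> E x x)"

definition walk :: "'a set \<Rightarrow> ('a \<Rightarrow> 'a \<Rightarrow> bool) \<Rightarrow> 'a list \<Rightarrow> bool" where
  "walk V E xs \<longleftrightarrow> xs \<noteq> [] \<and> set xs \<subseteq> V \<and> successively E xs"

definition connected_graph :: "'a set \<Rightarrow> ('a \<Rightarrow> 'a \<Rightarrow> bool) \<Rightarrow> bool" where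
  "connected_graph V E \<longleftrightarrow> V \<noteq> {} \<and>
     (\<forall>u\<in>V. \<forall>v\<in>V. \<exists>xs. walk V E xs \<and> hd xs = u \<and> last xs = v)"

(* graph distance (meaningful for connected graphs) *)
definition gdist :: "'a set \<Rightarrow> ('a \<Rightarrow> 'a \<Rightarrow> bool) \<Rightarrow> 'a \<Rightarrow> 'a \<Rightarrow> nat" where
  "gdist V E u v = (LEAST n. \<exists>xs. walk V E xs \<and> length xs = Suc n \<and> hd xs = u \<and> last xs = v)"

definition diam :: "'a set \<Rightarrow> ('a \<Rightarrow> 'a \<Rightarrow> bool) \<Rightarrow> nat" where
  "diam V E = Max {gdist V E u v | u v. u \<in> V \<and> v \<in> V}"

definition geodesic :: "'a set \<Rightarrow> ('a \<Rightarrow> 'a \<Rightarrow> bool) \<Rightarrow> nat \<Rightarrow> 'a list \<Rightarrow> bool" where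
  "geodesic V E s xs \<longleftrightarrow> walk V E xs \<and> length xs = Suc s \<and> gdist V E (hd xs) (last xs) = s"

definition cycle :: "'a set \<Rightarrow> ('a \<Rightarrow> 'a \<Rightarrow> bool) \<Rightarrow> 'a list \<Rightarrow> bool" where
  "cycle V E xs \<longleftrightarrow> walk V E xs \<and> distinct xs \<and> length xs \<ge> 3 \<and> E (last xs) (hd xs)"

definition has_girth :: "'a set \<Rightarrow> ('a \<Rightarrow> 'a \<Rightarrow> bool) \<Rightarrow> nat \<Rightarrow> bool" where
  "has_girth V E g \<longleftrightarrow> (\<exists>xs. cycle V E xs \<and> length xs = g) \<and> (\<forall>xs. cycle V E xs \<longrightarrow> g \<le> length xs)"

definition bipartite :: "'a set \<Rightarrow> ('a \<Rightarrow> 'a \<Rightarrow> bool) \<Rightarrow> bool" where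
  "bipartite V E \<longleftrightarrow> (\<exists>X. X \<subseteq> V \<and> (\<forall>x y. E x y \<longrightarrow> (x \<in> X \<longleftrightarrow> y \<notin> X)))"

definition graph_aut :: "'a set \<Rightarrow> ('a \<Rightarrow> 'a \<Rightarrow> bool) \<Rightarrow> ('a \<Rightarrow> 'a) \<Rightarrow> bool" where
  "graph_aut V E g \<longleftrightarrow> bij_betw g V V \<and> (\<forall>x. x \<notin> V \<longrightarrow> g x = x) \<and>
     (\<forall>x\<in>V. \<forall>y\<in>V. E x y \<longleftrightarrow> E (g x) (g y))"

definition perm_inv :: "'a set \<Rightarrow> ('a \<Rightarrow> 'a) \<Rightarrow> 'a \<Rightarrow> 'a" where
  "perm_inv V g = (\<lambda>x. if x \<in> V then inv_into V g x else x)"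

definition perm_subgroup :: "'a set \<Rightarrow> ('a \<Rightarrow> 'a) set \<Rightarrow> bool" where
  "perm_subgroup V G \<longleftrightarrow> id \<in> G \<and>
     (\<forall>g\<in>G. bij_betw g V V \<and> (\<forall>x. x \<notin> V \<longrightarrow> g x = x)) \<and>
     (\<forall>g\<in>G. \<forall>h\<in>G. g \<circ> h \<in> G) \<and> (\<forall>g\<in>G. perm_inv V g \<in> G)"

definition aut_subgroup :: "'a set \<Rightarrow> ('a \<Rightarrow> 'a \<Rightarrow> bool) \<Rightarrow> ('a \<Rightarrow> 'a) set \<Rightarrow> bool" where
  "aut_subgroup V E G \<longleftrightarrow> perm_subgroup V G \<and> (\<forall>g\<in>G. graph_aut V E g)"

definition normal_subgroup :: "'a set \<Rightarrow> ('a \<Rightarrow> 'a) set \<Rightarrow> ('a \<Rightarrow> 'a) set \<Rightarrow> bool" where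
  "normal_subgroup V N G \<longleftrightarrow> N \<subseteq> G \<and> perm_subgroup V N \<and>
     (\<forall>g\<in>G. \<forall>n\<in>N. g \<circ> n \<circ> perm_inv V g \<in> N)"

definition orbit :: "('a \<Rightarrow> 'a) set \<Rightarrow> 'a \<Rightarrow> 'a set" where
  "orbit N x = {n x | n. n \<in> N}"

definition geodesic_transitive :: "'a set \<Rightarrow> ('a \<Rightarrow> 'a \<Rightarrow> bool) \<Rightarrow> ('a \<Rightarrow> 'a) set \<Rightarrow> nat \<Rightarrow> bool" where
  "geodesic_transitive V E G s \<longleftrightarrow> (\<exists>xs. geodesic V E s xs) \<and>
     (\<forall>i\<le>s. \<forall>xs ys. geodesic V E i xs \<and> geodesic V E i ys \<longrightarrow> (\<exists>g\<in>G. map g xs = ys))"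

definition transitive_at_distance :: "'a set \<Rightarrow> ('a \<Rightarrow> 'a \<Rightarrow> bool) \<Rightarrow> ('a \<Rightarrow> 'a) set \<Rightarrow> nat \<Rightarrow> bool" where
  "transitive_at_distance V E G i \<longleftrightarrow>
     (\<forall>u\<in>V. \<forall>v\<in>V. \<forall>x\<in>V. \<forall>y\<in>V. gdist V E u v = i \<and> gdist V E x y = i \<longrightarrow>
        (\<exists>g\<in>G. g u = x \<and> g v = y))"

definition distance_transitive_upto :: "'a set \<Rightarrow> ('a \<Rightarrow> 'a \<Rightarrow> bool) \<Rightarrow> ('a \<Rightarrow> 'a) set \<Rightarrow> nat \<Rightarrow> bool" where
  "distance_transitive_upto V E G s \<longleftrightarrow> (\<forall>i\<le>s. transitive_at_distance V E G i)"

definition distance_transitive :: "'a set \<Rightarrow> ('a \<Rightarrow> 'a \<Rightarrow> bool) \<Rightarrow> ('a \<Rightarrow> 'a) set \<Rightarrow> bool" where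
  "distance_transitive V E G \<longleftrightarrow> distance_transitive_upto V E G (diam V E)"

definition quot_adj :: "('a \<Rightarrow> 'a \<Rightarrow> bool) \<Rightarrow> 'a set \<Rightarrow> 'a set \<Rightarrow> bool" where
  "quot_adj E B C \<longleftrightarrow> B \<noteq> C \<and> (\<exists>x\<in>B. \<exists>y\<in>C. E x y)"

definition quotient_is_Krr :: "('a \<Rightarrow> 'a \<Rightarrow> bool) \<Rightarrow> 'a set set \<Rightarrow> nat \<Rightarrow> bool" where
  "quotient_is_Krr E Q r \<longleftrightarrow> (\<exists>L R. L \<union> R = Q \<and> L \<inter> R = {} \<and> card L = r \<and> card R = r \<and>
     (\<forall>B\<in>Q. \<forall>C\<in>Q. quot_adj E B C \<longleftrightarrow> (B \<in> L \<and> C \<in> R) \<or> (B \<in> R \<and> C \<in> L)))"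

definition is_cover :: "('a \<Rightarrow> 'a \<Rightarrow> bool) \<Rightarrow> 'a set set \<Rightarrow> bool" where
  "is_cover E Q \<longleftrightarrow> (\<forall>B\<in>Q. \<forall>C\<in>Q. quot_adj E B C \<longrightarrow> (\<forall>x\<in>B. card {y\<in>C. E x y} = 1))"

(* intersection array (b_0,...,b_{d-1}; c_1,...,c_d) given as lists bs, cs *)
definition has_intersection_array :: "'a set \<Rightarrow> ('a \<Rightarrow> 'a \<Rightarrow> bool) \<Rightarrow> nat list \<Rightarrow> nat list \<Rightarrow> bool" where
  "has_intersection_array V E bs cs \<longleftrightarrow> connected_graph V E \<and>
     length bs = diam V E \<and> length cs = diam V E \<and>
     (\<forall>u\<in>V. \<forall>v\<in>V. let i = gdist V E u v in
        (i < diam V E \<longrightarrow> card {w. E v w \<and> gdist V E u w = Suc i} = bs ! i) \<and>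
        (1 \<le> i \<longrightarrow> card {w. E v w \<and> gdist V E u w = i - 1} = cs ! (i - 1)))"

definition hadamard_graph_valency :: "'a set \<Rightarrow> ('a \<Rightarrow> 'a \<Rightarrow> bool) \<Rightarrow> nat \<Rightarrow> bool" where
  "hadamard_graph_valency V E k \<longleftrightarrow> (\<exists>\<mu>. k = 2 * \<mu> \<and>
     has_intersection_array V E [2*\<mu>, 2*\<mu> - 1, \<mu>, 1] [1, \<mu>, 2*\<mu> - 1, 2*\<mu>])"

definition antipodal_rel :: "'a set \<Rightarrow> ('a \<Rightarrow> 'a \<Rightarrow> bool) \<Rightarrow> 'a \<Rightarrow> 'a \<Rightarrow> bool" where
  "antipodal_rel V E u v \<longleftrightarrow> gdist V E u v = 0 \<or> gdist V E u v = diam V E"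

definition antipodal :: "'a set \<Rightarrow> ('a \<Rightarrow> 'a \<Rightarrow> bool) \<Rightarrow> bool" where
  "antipodal V E \<longleftrightarrow> (\<forall>u\<in>V. \<forall>v\<in>V. \<forall>w\<in>V.
      antipodal_rel V E u v \<and> antipodal_rel V E v w \<longrightarrow> antipodal_rel V E u w)"

definition antipodal_classes :: "'a set \<Rightarrow> ('a \<Rightarrow> 'a \<Rightarrow> bool) \<Rightarrow> 'a set set" where
  "antipodal_classes V E = (\<lambda>u. {v\<in>V. antipodal_rel V E u v}) ` V"

(* \<Gamma> is an antipodal m-fold cover of K_{r,r}, i.e. the graph mK_{r,r} *)
definition antipodal_cover_Krr :: "'a set \<Rightarrow> ('a \<Rightarrow> 'a \<Rightarrow> bool) \<Rightarrow> nat \<Rightarrow> nat \<Rightarrow> bool" where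
  "antipodal_cover_Krr V E m r \<longleftrightarrow> antipodal V E \<and>
     (\<forall>A\<in>antipodal_classes V E. card A = m) \<and>
     quotient_is_Krr E (antipodal_classes V E) r \<and> is_cover E (antipodal_classes V E)"

definition RGD :: "'p set \<Rightarrow> 'p set set \<Rightarrow> 'b set \<Rightarrow> ('b \<Rightarrow> 'p set) \<Rightarrow> 'b set set
                   \<Rightarrow> nat \<Rightarrow> nat \<Rightarrow> nat \<Rightarrow> bool" where
  "RGD X P Y blk Pi k lam n \<longleftrightarrow>
     finite X \<and> card X = k * n \<and>
     \<comment> \<open>P is a partition of X into classes of size n\<close>
     \<Union>P = X \<and> (\<forall>C\<in>P. C \<noteq> {} \<and> card C = n) \<and> (\<forall>C\<in>P. \<forall>D\<in>P. C \<noteq> D \<longrightarrow> C \<inter> D = {}) \<and>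
     \<comment> \<open>blocks are k-subsets meeting every class in exactly one point\<close>
     (\<forall>y\<in>Y. blk y \<subseteq> X \<and> card (blk y) = k \<and> (\<forall>C\<in>P. card (blk y \<inter> C) = 1)) \<and>
     \<comment> \<open>two points in different classes lie in exactly lam blocks\<close>
     (\<forall>x\<in>X. \<forall>x'\<in>X. (\<not> (\<exists>C\<in>P. x \<in> C \<and> x' \<in> C)) \<longrightarrow>
        card {y\<in>Y. x \<in> blk y \<and> x' \<in> blk y} = lam) \<and>
     \<comment> \<open>resolvability: Pi partitions the blocks into parallel classes\<close>
     \<Union>Pi = Y \<and> (\<forall>\<pi>\<in>Pi. \<pi> \<noteq> {}) \<and> (\<forall>\<pi>\<in>Pi. \<forall>\<rho>\<in>Pi. \<pi> \<noteq> \<rho> \<longrightarrow> \<pi> \<inter> \<rho> = {}) \<and>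
     (\<forall>\<pi>\<in>Pi. \<forall>x\<in>X. \<exists>!y. y \<in> \<pi> \<and> x \<in> blk y)"

(* \<Gamma> is (isomorphic to) the incidence graph of the design with point set X and blocks
   indexed by Y, block y consisting of the neighbours of y *)
definition incidence_graph_of :: "'a set \<Rightarrow> ('a \<Rightarrow> 'a \<Rightarrow> bool) \<Rightarrow> 'a set \<Rightarrow> 'a set \<Rightarrow> bool" where
  "incidence_graph_of V E X Y \<longleftrightarrow> X \<union> Y = V \<and> X \<inter> Y = {} \<and>
     (\<forall>u v. E u v \<longrightarrow> (u \<in> X \<and> v \<in> Y) \<or> (u \<in> Y \<and> v \<in> X))"

definition nbr_block :: "('a \<Rightarrow> 'a \<Rightarrow> bool) \<Rightarrow> 'a set \<Rightarrow> 'a \<Rightarrow> 'a set" where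
  "nbr_block E X y = {x\<in>X. E x y}"

end

theory Submission
  imports Defs
begin

locale sg =
  fixes V :: "'a set" and E :: "'a \<Rightarrow> 'a \<Rightarrow> bool"
  assumes graph: "simple_graph V E" and conn: "connected_graph V E"
begin

lemma finV: "finite V" using graph by (simp add: simple_graph_def)
lemma EV1: "E x y \<Longrightarrow> x \<in> V" using graph by (simp add: simple_graph_def)
lemma EV2: "E x y \<Longrightarrow> y \<in> V" using graph by (simp add: simple_graph_def)
lemma Esym: "E x y \<Longrightarrow> E y x" using graph by (simp add: simple_graph_def)
lemma Eirr: "\<not> E x x" using graph by (simp add: simple_graph_def)

lemma walk_nth: "walk V E xs \<longleftrightarrow> xs \<noteq> [] \<and> (\<forall>i<length xs. xs!i \<in> V) \<and>
   (\<forall>i. Suc i < length xs \<longrightarrow> E (xs!i) (xs!Suc i))"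
  unfolding walk_def successively_conv_nth by (auto simp: set_conv_nth)

lemma walk_exists: "u \<in> V \<Longrightarrow> v \<in> V \<Longrightarrow> \<exists>xs. walk V E xs \<and> hd xs = u \<and> last xs = v"
  using conn by (auto simp: connected_graph_def)

lemma gdist_walk:
  assumes "u \<in> V" "v \<in> V"
  shows "\<exists>xs. walk V E xs \<and> length xs = Suc (gdist V E u v) \<and> hd xs = u \<and> last xs = v"
proof -
  obtain xs where xs: "walk V E xs" "hd xs = u" "last xs = v" using walk_exists assms by blast
  then have ne: "xs \<noteq> []" by (simp add: walk_def)
  then have "\<exists>n. \<exists>xs. walk V E xs \<and> length xs = Suc n \<and> hd xs = u \<and> last xs = v"
    using xs by (intro exI[of _ "length xs - 1"] exI[of _ xs]) auto
  then show ?thesis unfolding gdist_def by (rule LeastI_ex)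
qed

lemma gdist_le:
  assumes "walk V E xs" "length xs = Suc n" "hd xs = u" "last xs = v"
  shows "gdist V E u v \<le> n"
  unfolding gdist_def using assms by (intro Least_le) blast

lemma gdist_refl: "u \<in> V \<Longrightarrow> gdist V E u u = 0"
  using gdist_le[of "[u]" 0 u u] by (simp add: walk_def)

lemma gdist_0: assumes "u \<in> V" "v \<in> V" "gdist V E u v = 0" shows "u = v"
proof -
  obtain xs where "walk V E xs" "length xs = Suc 0" "hd xs = u" "last xs = v"
    using gdist_walk assms by force
  then show ?thesis by (cases xs) auto
qed

lemma gdist_E: assumes "E u v" shows "gdist V E u v = 1"
proof -
  have "gdist V E u v \<le> 1" using gdist_le[of "[u,v]" 1 u v] assms EV1 EV2 by (simp add: walk_def)
  moreover have "u \<noteq> v" using assms Eirr by auto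
  then have "gdist V E u v \<noteq> 0" using gdist_0 assms EV1 EV2 by blast
  ultimately show ?thesis by simp
qed

lemma gdist_1: assumes "u \<in> V" "v \<in> V" "gdist V E u v = 1" shows "E u v"
proof -
  obtain xs where xs: "walk V E xs" "length xs = Suc 1" "hd xs = u" "last xs = v"
    using gdist_walk assms by force
  then obtain a b where "xs = [a,b]" by (cases xs; cases "tl xs") auto
  then show ?thesis using xs by (auto simp: walk_def)
qed

lemma walk_rev: "walk V E xs \<Longrightarrow> walk V E (rev xs)"
  unfolding walk_def using Esym by (auto intro: successively_mono)

lemma gdist_sym: assumes "u \<in> V" "v \<in> V" shows "gdist V E u v = gdist V E v u"
proof -
  have *: "gdist V E b a \<le> gdist V E a b" if ab: "a \<in> V" "b \<in> V" for a b
  proof -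
    obtain xs where xs: "walk V E xs" "length xs = Suc (gdist V E a b)" "hd xs = a" "last xs = b"
      using gdist_walk ab by blast
    have ne: "xs \<noteq> []" using xs by (simp add: walk_def)
    show ?thesis using gdist_le[of "rev xs" "gdist V E a b" b a] xs walk_rev ne
      by (simp add: hd_rev last_rev)
  qed
  show ?thesis using *[of u v] *[of v u] assms by simp
qed

lemma walk_app: assumes "walk V E xs" "walk V E ys" "last xs = hd ys"
  shows "walk V E (xs @ tl ys)"
proof (cases ys)
  case Nil then show ?thesis using assms by (simp add: walk_def)
next
  case (Cons y ys')
  show ?thesis
  proof (cases ys')
    case Nil then show ?thesis using assms Cons by simp
  next
    case (Cons z zs)
    then show ?thesis using assms \<open>ys = y # ys'\<close>
      by (auto simp: walk_def successively_append_iff)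
  qed
qed

lemma gdist_tri: assumes "u \<in> V" "v \<in> V" "w \<in> V"
  shows "gdist V E u w \<le> gdist V E u v + gdist V E v w"
proof -
  obtain xs where xs: "walk V E xs" "length xs = Suc (gdist V E u v)" "hd xs = u" "last xs = v"
    using gdist_walk assms by blast
  obtain ys where ys: "walk V E ys" "length ys = Suc (gdist V E v w)" "hd ys = v" "last ys = w"
    using gdist_walk assms by blast
  have w: "walk V E (xs @ tl ys)" using walk_app xs ys by simp
  have "xs \<noteq> []" "ys \<noteq> []" using xs ys by (auto simp: walk_def)
  then have "hd (xs @ tl ys) = u" "last (xs @ tl ys) = w"
    using xs ys by (auto simp: last_append last_tl) (metis last_tl list.collapse last_ConsL)
  moreover have "length (xs @ tl ys) = Suc (gdist V E u v + gdist V E v w)" using xs ys by simp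
  ultimately show ?thesis using gdist_le w by blast
qed

lemma gdist_step: assumes "u \<in> V" "E v w"
  shows "gdist V E u w \<le> gdist V E u v + 1" "gdist V E u v \<le> gdist V E u w + 1"
proof -
  have "v \<in> V" "w \<in> V" using assms EV1 EV2 by auto
  then show "gdist V E u w \<le> gdist V E u v + 1"
    using gdist_tri[of u v w] gdist_E[OF assms(2)] assms by simp
  show "gdist V E u v \<le> gdist V E u w + 1"
    using gdist_tri[of u w v] gdist_E[OF Esym[OF assms(2)]] assms \<open>v \<in> V\<close> \<open>w \<in> V\<close> by simp
qed

lemma last_take_Suc: "i < length xs \<Longrightarrow> last (take (Suc i) xs) = xs ! i"
proof (induction xs arbitrary: i)
  case Nil then show ?case by simp
next
  case (Cons x xs) then show ?case by (cases i) auto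
qed

lemma geo_path: assumes "u \<in> V" "v \<in> V"
  shows "\<exists>p. p 0 = u \<and> p (gdist V E u v) = v \<and>
     (\<forall>i\<le>gdist V E u v. p i \<in> V \<and> gdist V E u (p i) = i) \<and>
     (\<forall>i<gdist V E u v. E (p i) (p (Suc i)))"
proof -
  define n where "n = gdist V E u v"
  obtain xs where xs: "walk V E xs" "length xs = Suc n" "hd xs = u" "last xs = v"
    using gdist_walk assms n_def by blast
  have x0: "xs ! 0 = u" using xs by (cases xs) auto
  have xn: "xs ! n = v" using xs by (auto simp: last_conv_nth walk_def)
  have inV: "xs ! i \<in> V" if "i \<le> n" for i using xs that by (simp add: walk_nth)
  have ed: "E (xs ! i) (xs ! Suc i)" if "i < n" for i using xs that by (simp add: walk_nth)
  have d: "gdist V E u (xs ! i) = i" if "i \<le> n" for i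
  proof -
    have "walk V E (take (Suc i) xs)" using xs that by (auto simp: walk_nth)
    moreover have "hd (take (Suc i) xs) = u" "last (take (Suc i) xs) = xs ! i"
      using xs that x0 last_take_Suc[of i xs] by (auto simp: hd_conv_nth)
    ultimately have le1: "gdist V E u (xs ! i) \<le> i"
      using gdist_le[of "take (Suc i) xs" i] xs that by simp
    have "walk V E (drop i xs)" using xs that by (auto simp: walk_nth)
    moreover have "hd (drop i xs) = xs ! i" "last (drop i xs) = v"
      using xs that by (auto simp: hd_drop_conv_nth)
    ultimately have le2: "gdist V E (xs ! i) v \<le> n - i"
      using gdist_le[of "drop i xs" "n - i"] xs that by simp
    have "n \<le> gdist V E u (xs ! i) + gdist V E (xs ! i) v"
      using gdist_tri[of u "xs ! i" v] assms inV that n_def by simp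
    then show ?thesis using le1 le2 that by linarith
  qed
  show ?thesis using x0 xn inV ed d n_def[symmetric]
    by (intro exI[of _ "\<lambda>i. xs ! i"]) auto
qed

lemma parity_path:
  assumes X: "\<forall>x y. E x y \<longrightarrow> (x \<in> X \<longleftrightarrow> y \<notin> X)"
    and p: "\<forall>i<n. E (p i) (p (Suc i))"
  shows "(p 0 \<in> X \<longleftrightarrow> p n \<in> X) \<longleftrightarrow> even n"
  using p
proof (induction n)
  case 0 then show ?case by simp
next
  case (Suc n)
  then have "(p 0 \<in> X \<longleftrightarrow> p n \<in> X) \<longleftrightarrow> even n" by simp
  moreover have "p n \<in> X \<longleftrightarrow> p (Suc n) \<notin> X" using Suc.prems X by auto
  ultimately show ?case by auto
qed

lemma parity_gdist:
  assumes X: "\<forall>x y. E x y \<longrightarrow> (x \<in> X \<longleftrightarrow> y \<notin> X)" and "u \<in> V" "v \<in> V"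
  shows "(u \<in> X \<longleftrightarrow> v \<in> X) \<longleftrightarrow> even (gdist V E u v)"
proof -
  obtain p where p: "p 0 = u" "p (gdist V E u v) = v" "\<forall>i<gdist V E u v. E (p i) (p (Suc i))"
    using geo_path assms by blast
  show ?thesis using parity_path[OF X p(3)] p by simp
qed

end

locale setting = sg V E for V :: "'a set" and E +
  fixes G N :: "('a \<Rightarrow> 'a) set" and m r :: nat and L R :: "'a set set"
  assumes GT: "geodesic_transitive V E G 3"
    and girth: "has_girth V E 4 \<or> has_girth V E 5"
    and G_aut: "aut_subgroup V E G"
    and N_normal: "normal_subgroup V N G"
    and orbits_m: "\<forall>x\<in>V. card (orbit N x) = m" and m_ge: "m \<ge> 2"
    and r_ge: "r \<ge> 3"
    and cover: "is_cover E (orbit N ` V)"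
    and LRu: "L \<union> R = orbit N ` V" and LRi: "L \<inter> R = {}" and cL: "card L = r" and cR: "card R = r"
    and LRadj: "\<forall>B\<in>orbit N ` V. \<forall>C\<in>orbit N ` V. quot_adj E B C \<longleftrightarrow> (B \<in> L \<and> C \<in> R) \<or> (B \<in> R \<and> C \<in> L)"
begin

lemma G_bij: "g \<in> G \<Longrightarrow> bij_betw g V V"
  using G_aut unfolding aut_subgroup_def graph_aut_def by blast
lemma G_aut1: "g \<in> G \<Longrightarrow> graph_aut V E g"
  using G_aut unfolding aut_subgroup_def by blast
lemma G_E: assumes "g \<in> G" "E x y" shows "E (g x) (g y)"
proof -
  have "x \<in> V" "y \<in> V" using assms EV1 EV2 by auto
  then show ?thesis using G_aut1[OF assms(1)] assms(2) unfolding graph_aut_def by blast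
qed
lemma G_E': "g \<in> G \<Longrightarrow> x \<in> V \<Longrightarrow> y \<in> V \<Longrightarrow> E (g x) (g y) \<Longrightarrow> E x y"
  using G_aut1 unfolding graph_aut_def by blast
lemma G_V: "g \<in> G \<Longrightarrow> x \<in> V \<Longrightarrow> g x \<in> V"
  using G_bij bij_betw_apply by metis
lemma G_inv: "g \<in> G \<Longrightarrow> perm_inv V g \<in> G"
  using G_aut unfolding aut_subgroup_def perm_subgroup_def by blast
lemma G_comp: "g \<in> G \<Longrightarrow> h \<in> G \<Longrightarrow> g \<circ> h \<in> G"
  using G_aut unfolding aut_subgroup_def perm_subgroup_def by blast
lemma perm_inv_l: assumes "g \<in> G" "x \<in> V" shows "perm_inv V g (g x) = x"
proof -
  have "inj_on g V" using G_bij[OF assms(1)] bij_betw_imp_inj_on by blast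
  then have "inv_into V g (g x) = x" using assms(2) inv_into_f_f by metis
  then show ?thesis using G_V[OF assms] unfolding perm_inv_def by simp
qed
lemma perm_inv_r: assumes "g \<in> G" "x \<in> V" shows "g (perm_inv V g x) = x"
proof -
  have "g ` V = V" using G_bij[OF assms(1)] bij_betw_imp_surj_on by blast
  then have "g (inv_into V g x) = x" using assms(2) f_inv_into_f by metis
  then show ?thesis using assms(2) unfolding perm_inv_def by simp
qed

lemma walk_map: assumes "g \<in> G" "walk V E xs" shows "walk V E (map g xs)"
proof -
  have "set (map g xs) \<subseteq> V" using assms G_V unfolding walk_def by auto
  moreover have "successively (\<lambda>x y. E (g x) (g y)) xs"
    using assms(2) G_E[OF assms(1)] unfolding walk_def by (blast intro: successively_mono)
  ultimately show ?thesis using assms(2) unfolding walk_def successively_map by simp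
qed

lemma gdist_G_le: assumes "g \<in> G" "u \<in> V" "v \<in> V" shows "gdist V E (g u) (g v) \<le> gdist V E u v"
proof -
  obtain xs where xs: "walk V E xs" "length xs = Suc (gdist V E u v)" "hd xs = u" "last xs = v"
    using gdist_walk assms by blast
  have "xs \<noteq> []" using xs by (simp add: walk_def)
  then show ?thesis using gdist_le[of "map g xs"] walk_map[OF assms(1) xs(1)] xs
    by (simp add: hd_map last_map)
qed

lemma gdist_G: assumes "g \<in> G" "u \<in> V" "v \<in> V" shows "gdist V E (g u) (g v) = gdist V E u v"
proof -
  have "gdist V E (perm_inv V g (g u)) (perm_inv V g (g v)) \<le> gdist V E (g u) (g v)"
    using gdist_G_le G_inv assms G_V by blast
  then have "gdist V E u v \<le> gdist V E (g u) (g v)" using perm_inv_l assms by simp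
  then show ?thesis using gdist_G_le[OF assms] by simp
qed

lemma N_G: "N \<subseteq> G" using N_normal by (simp add: normal_subgroup_def)
lemma N_id: "id \<in> N" using N_normal by (simp add: normal_subgroup_def perm_subgroup_def)
lemma N_comp: "n \<in> N \<Longrightarrow> n' \<in> N \<Longrightarrow> n \<circ> n' \<in> N"
  using N_normal by (simp add: normal_subgroup_def perm_subgroup_def)
lemma N_inv: "n \<in> N \<Longrightarrow> perm_inv V n \<in> N"
  using N_normal by (simp add: normal_subgroup_def perm_subgroup_def)
lemma N_conj: "g \<in> G \<Longrightarrow> n \<in> N \<Longrightarrow> g \<circ> n \<circ> perm_inv V g \<in> N"
  using N_normal by (simp add: normal_subgroup_def)

lemma orbit_V: assumes "x \<in> V" shows "orbit N x \<subseteq> V"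
proof
  fix y assume "y \<in> orbit N x"
  then obtain n where "n \<in> N" "y = n x" unfolding orbit_def by blast
  then show "y \<in> V" using N_G G_V assms by blast
qed
lemma orbit_self: "x \<in> orbit N x"
  unfolding orbit_def using N_id by (metis (mono_tags, lifting) id_apply mem_Collect_eq)
lemma orbit_eq: assumes "x \<in> V" "y \<in> orbit N x" shows "orbit N y = orbit N x"
proof -
  obtain n where n: "n \<in> N" "y = n x" using assms unfolding orbit_def by blast
  have "z \<in> orbit N x" if zy: "z \<in> orbit N y" for z
  proof -
    obtain n' where n': "n' \<in> N" "z = n' y" using zy unfolding orbit_def by blast
    have "z = (n' \<circ> n) x" "n' \<circ> n \<in> N" using n n' N_comp by auto
    then show ?thesis unfolding orbit_def by blast
  qed
  moreover have "z \<in> orbit N y" if zx: "z \<in> orbit N x" for z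
  proof -
    obtain n' where n': "n' \<in> N" "z = n' x" using zx unfolding orbit_def by blast
    have "perm_inv V n y = x" using n perm_inv_l N_G assms by auto
    then have "z = (n' \<circ> perm_inv V n) y" using n' by simp
    moreover have "n' \<circ> perm_inv V n \<in> N" using N_comp N_inv n n' by auto
    ultimately show ?thesis unfolding orbit_def by blast
  qed
  ultimately show ?thesis by blast
qed

lemma orbit_G: assumes "g \<in> G" "x \<in> V" "y \<in> orbit N x" shows "g y \<in> orbit N (g x)"
proof -
  obtain n where n: "n \<in> N" "y = n x" using assms unfolding orbit_def by blast
  have "g y = (g \<circ> n \<circ> perm_inv V g) (g x)" using n perm_inv_l assms by simp
  moreover have "g \<circ> n \<circ> perm_inv V g \<in> N" using N_conj assms n by auto
  ultimately show ?thesis unfolding orbit_def by blast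
qed

lemma finQ: "finite (orbit N ` V)" using finV by simp
lemma finL: "finite L" using finQ LRu finite_subset[of L "orbit N ` V"] by blast
lemma finR: "finite R" using finQ LRu finite_subset[of R "orbit N ` V"] by blast
lemma orbit_LR: "x \<in> V \<Longrightarrow> orbit N x \<in> L \<or> orbit N x \<in> R" using LRu by blast

definition X where "X = \<Union>L"

lemma inQ: "C \<in> L \<union> R \<Longrightarrow> \<exists>c\<in>V. C = orbit N c" using LRu by auto

lemma inX: assumes "x \<in> V" shows "x \<in> X \<longleftrightarrow> orbit N x \<in> L"
proof
  assume "x \<in> X"
  then obtain C where C: "C \<in> L" "x \<in> C" by (auto simp: X_def)
  then obtain c where "c \<in> V" "C = orbit N c" using inQ by blast
  then have "orbit N x = C" using C orbit_eq by blast
  then show "orbit N x \<in> L" using C by simp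
next
  assume "orbit N x \<in> L" then show "x \<in> X" using orbit_self X_def by blast
qed

lemma notinX: assumes "x \<in> V" shows "x \<notin> X \<longleftrightarrow> orbit N x \<in> R"
proof -
  have "orbit N x \<notin> L \<longleftrightarrow> orbit N x \<in> R" using orbit_LR[OF assms] LRi by auto
  then show ?thesis using inX[OF assms] by simp
qed

lemma geod1: assumes "E x y" shows "geodesic V E 1 [x, y]"
proof -
  have "x \<in> V" "y \<in> V" using assms EV1 EV2 by auto
  then have "walk V E [x, y]" using assms unfolding walk_def by simp
  then show ?thesis using gdist_E[OF assms] unfolding geodesic_def by simp
qed

lemma L_ne: "L \<noteq> {}"
proof
  assume "L = {}" then have "r = 0" using cL by simp
  then show False using r_ge by simp
qed
lemma R_ne: "R \<noteq> {}"
proof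
  assume "R = {}" then have "r = 0" using cR by simp
  then show False using r_ge by simp
qed

lemma GT3: "i \<le> 3 \<Longrightarrow> geodesic V E i xs \<Longrightarrow> geodesic V E i ys \<Longrightarrow> \<exists>g\<in>G. map g xs = ys"
  using GT unfolding geodesic_transitive_def by blast

lemma no_intra: assumes "E x0 y0" shows "orbit N y0 \<noteq> orbit N x0"
proof
  assume eq: "orbit N y0 = orbit N x0"
  have x0V: "x0 \<in> V" using assms EV1 by blast
  obtain C D where CD: "C \<in> L" "D \<in> R" using L_ne R_ne by blast
  then have "C \<in> orbit N ` V" "D \<in> orbit N ` V" using LRu by auto
  then have "quot_adj E C D" using LRadj CD by blast
  then obtain x y where xy: "x \<in> C" "y \<in> D" "E x y" "C \<noteq> D" by (auto simp: quot_adj_def)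
  obtain g where g: "g \<in> G" "map g [x0, y0] = [x, y]"
    using GT3[of 1 "[x0, y0]" "[x, y]", OF _ geod1[OF assms] geod1[OF xy(3)]] by auto
  have "y0 \<in> orbit N x0" using eq orbit_self[of y0] by simp
  then have "y \<in> orbit N x" using orbit_G[OF g(1) x0V] g(2) by auto
  obtain c where c: "c \<in> V" "C = orbit N c" using inQ CD by blast
  have oC: "orbit N x = C" using xy orbit_eq[OF c(1)] c(2) by blast
  obtain d where d: "d \<in> V" "D = orbit N d" using inQ CD by blast
  have oD: "orbit N y = D" using xy orbit_eq[OF d(1)] d(2) by blast
  have "orbit N y = orbit N x" using orbit_eq[OF EV1[OF xy(3)] \<open>y \<in> orbit N x\<close>] .
  then show False using oC oD xy by simp
qed

lemma bip: assumes "E x y" shows "x \<in> X \<longleftrightarrow> y \<notin> X"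
proof -
  have V: "x \<in> V" "y \<in> V" using assms EV1 EV2 by auto
  have ne: "orbit N x \<noteq> orbit N y" using no_intra[OF assms] by simp
  have qa: "quot_adj E (orbit N x) (orbit N y)"
    using ne assms orbit_self unfolding quot_adj_def by blast
  then have "(orbit N x \<in> L \<and> orbit N y \<in> R) \<or> (orbit N x \<in> R \<and> orbit N y \<in> L)"
    using LRadj V by blast
  then show ?thesis
  proof
    assume "orbit N x \<in> L \<and> orbit N y \<in> R"
    then show ?thesis using inX[OF V(1)] notinX[OF V(2)] by simp
  next
    assume "orbit N x \<in> R \<and> orbit N y \<in> L"
    then show ?thesis using inX[OF V(2)] notinX[OF V(1)] by simp
  qed
qed

lemma bipX: "\<forall>x y. E x y \<longrightarrow> (x \<in> X \<longleftrightarrow> y \<notin> X)" using bip by blast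

lemma cover1: assumes "x \<in> V" "y \<in> V" "x \<in> X \<longleftrightarrow> y \<notin> X"
  shows "card {z \<in> orbit N y. E x z} = 1"
proof -
  have "(orbit N x \<in> L \<and> orbit N y \<in> R) \<or> (orbit N x \<in> R \<and> orbit N y \<in> L)"
    using assms inX notinX by blast
  moreover have "orbit N x \<in> orbit N ` V" "orbit N y \<in> orbit N ` V" using assms by auto
  ultimately have "quot_adj E (orbit N x) (orbit N y)" using LRadj by blast
  moreover have "orbit N x \<in> orbit N ` V" "orbit N y \<in> orbit N ` V" using assms by auto
  ultimately show ?thesis using cover orbit_self[of x] unfolding is_cover_def by blast
qed

lemma cover_ex: assumes "x \<in> V" "y \<in> V" "x \<in> X \<longleftrightarrow> y \<notin> X"
  shows "\<exists>z \<in> orbit N y. E x z"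
proof -
  obtain z where "{z \<in> orbit N y. E x z} = {z}" using cover1[OF assms] card_1_singletonE by blast
  then show ?thesis by blast
qed

lemma cover_uniq: assumes "x \<in> V" "y \<in> V" "x \<in> X \<longleftrightarrow> y \<notin> X"
  and "z \<in> orbit N y" "E x z" "z' \<in> orbit N y" "E x z'" shows "z = z'"
proof -
  obtain w where w: "{z \<in> orbit N y. E x z} = {w}" using cover1[OF assms(1-3)] card_1_singletonE by blast
  have "z \<in> {z \<in> orbit N y. E x z}" "z' \<in> {z \<in> orbit N y. E x z}" using assms(4-) by auto
  then show ?thesis unfolding w by simp
qed

lemma same_side: assumes "x \<in> V" "y \<in> orbit N x" shows "x \<in> X \<longleftrightarrow> y \<in> X"
proof -
  have "y \<in> V" using assms orbit_V by blast
  have "orbit N y = orbit N x" using orbit_eq assms by blast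
  then show ?thesis using inX assms \<open>y \<in> V\<close> by simp
qed

lemma far: assumes "x \<in> V" "y \<in> orbit N x" "y \<noteq> x" shows "gdist V E x y \<ge> 4"
proof -
  have yV: "y \<in> V" using assms orbit_V by blast
  have ev: "even (gdist V E x y)" using parity_gdist[OF bipX assms(1) yV] same_side assms by blast
  have n0: "gdist V E x y \<noteq> 0" using gdist_0 assms yV by blast
  have n2: "gdist V E x y \<noteq> 2"
  proof
    assume d2: "gdist V E x y = 2"
    obtain p where p: "p 0 = x" "p 2 = y" "\<forall>i<2. E (p i) (p (Suc i))"
      using geo_path[OF assms(1) yV] d2 by auto
    have e1: "E (p 1) x" "E (p 1) y" using p Esym by (auto simp: numeral_2_eq_2)
    have "p 1 \<in> V" using e1 EV1 by blast
    moreover have "p 1 \<in> X \<longleftrightarrow> x \<notin> X" using bip e1 by blast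
    ultimately have "x = y" using cover_uniq[of "p 1" x x y, OF _ assms(1) _ orbit_self[of x] e1(1) assms(2) e1(2)]
      by blast
    then show False using assms(3) by simp
  qed
  have "gdist V E x y \<noteq> 1" "gdist V E x y \<noteq> 3" using ev by auto
  then show ?thesis using n0 n2 by linarith
qed

end

context setting begin

lemma orbit_disj: assumes "C \<in> L \<union> R" "D \<in> L \<union> R" "C \<noteq> D" shows "C \<inter> D = {}"
proof (rule ccontr)
  assume "C \<inter> D \<noteq> {}"
  then obtain z where z: "z \<in> C" "z \<in> D" by blast
  obtain c where c: "c \<in> V" "C = orbit N c" using inQ assms by blast
  obtain d where d: "d \<in> V" "D = orbit N d" using inQ assms by blast
  have "orbit N z = C" using orbit_eq[OF c(1)] z c by blast
  moreover have "orbit N z = D" using orbit_eq[OF d(1)] z d by blast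
  ultimately show False using assms by simp
qed

lemma fin_nbr: "finite {w. E v w}"
  using finV EV2 finite_subset[of "{w. E v w}" V] by blast

lemma valency_aux:
  assumes v: "v \<in> V" and S: "S \<subseteq> L \<union> R" "card S = r"
    and side: "\<forall>D\<in>S. \<forall>d\<in>D. v \<in> X \<longleftrightarrow> d \<notin> X"
    and nb: "\<forall>w. E v w \<longrightarrow> orbit N w \<in> S"
  shows "card {w. E v w} = r"
proof -
  have finS: "finite S" using S finL finR finite_subset[of S "L \<union> R"] by blast
  have eq: "{w. E v w} = (\<Union>D\<in>S. {z \<in> D. E v z})"
    using nb orbit_self by blast
  have fin: "\<forall>D\<in>S. finite {z \<in> D. E v z}"
  proof
    fix D assume "D \<in> S"
    have "{z \<in> D. E v z} \<subseteq> {w. E v w}" by blast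
    then show "finite {z \<in> D. E v z}" using fin_nbr finite_subset by blast
  qed
  have disj: "\<forall>D\<in>S. \<forall>D'\<in>S. D \<noteq> D' \<longrightarrow> {z \<in> D. E v z} \<inter> {z \<in> D'. E v z} = {}"
    using orbit_disj S by blast
  have one: "card {z \<in> D. E v z} = 1" if D: "D \<in> S" for D
  proof -
    obtain d where d: "d \<in> V" "D = orbit N d" using inQ S D by blast
    have "v \<in> X \<longleftrightarrow> d \<notin> X" using side D d orbit_self by blast
    then show ?thesis using cover1[OF v d(1)] d by simp
  qed
  have "card {w. E v w} = (\<Sum>D\<in>S. card {z \<in> D. E v z})"
    unfolding eq by (rule card_UN_disjoint[OF finS fin disj])
  also have "\<dots> = (\<Sum>D\<in>S. 1)" using one by simp
  also have "\<dots> = r" using S by simp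
  finally show ?thesis .
qed

lemma valency: assumes v: "v \<in> V" shows "card {w. E v w} = r"
proof (cases "v \<in> X")
  case True
  show ?thesis
  proof (rule valency_aux[OF v, of R])
    show "R \<subseteq> L \<union> R" "card R = r" using cR by auto
    show "\<forall>D\<in>R. \<forall>d\<in>D. (v \<in> X) = (d \<notin> X)"
    proof (intro ballI)
      fix D d assume "D \<in> R" "d \<in> D"
      then obtain c where c: "c \<in> V" "D = orbit N c" using inQ by blast
      then have "orbit N d = D" using orbit_eq \<open>d \<in> D\<close> by blast
      moreover have "d \<in> V" using orbit_V c \<open>d \<in> D\<close> by blast
      ultimately show "(v \<in> X) = (d \<notin> X)" using notinX \<open>D \<in> R\<close> True by simp
    qed
    show "\<forall>w. E v w \<longrightarrow> orbit N w \<in> R"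
      using True bip notinX EV2 by blast
  qed
next
  case False
  show ?thesis
  proof (rule valency_aux[OF v, of L])
    show "L \<subseteq> L \<union> R" "card L = r" using cL by auto
    show "\<forall>D\<in>L. \<forall>d\<in>D. (v \<in> X) = (d \<notin> X)"
    proof (intro ballI)
      fix D d assume "D \<in> L" "d \<in> D"
      then obtain c where c: "c \<in> V" "D = orbit N c" using inQ by blast
      then have "orbit N d = D" using orbit_eq \<open>d \<in> D\<close> by blast
      moreover have "d \<in> V" using orbit_V c \<open>d \<in> D\<close> by blast
      ultimately show "(v \<in> X) = (d \<notin> X)" using inX \<open>D \<in> L\<close> False by simp
    qed
    show "\<forall>w. E v w \<longrightarrow> orbit N w \<in> L"
      using False bip inX EV2 by blast
  qed
qed

lemma transport:
  assumes g: "g \<in> G" and uv: "u \<in> V" "v \<in> V"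
  shows "card {w. E (g v) w \<and> gdist V E (g u) w = j} = card {w. E v w \<and> gdist V E u w = j}"
proof -
  have eq: "{w. E (g v) w \<and> gdist V E (g u) w = j} = g ` {w. E v w \<and> gdist V E u w = j}"
  proof
    show "g ` {w. E v w \<and> gdist V E u w = j} \<subseteq> {w. E (g v) w \<and> gdist V E (g u) w = j}"
    proof
      fix x assume "x \<in> g ` {w. E v w \<and> gdist V E u w = j}"
      then obtain w where w: "x = g w" "E v w" "gdist V E u w = j" by blast
      have "w \<in> V" using w EV2 by blast
      then show "x \<in> {w. E (g v) w \<and> gdist V E (g u) w = j}"
        using w G_E[OF g] gdist_G[OF g uv(1)] by simp
    qed
    show "{w. E (g v) w \<and> gdist V E (g u) w = j} \<subseteq> g ` {w. E v w \<and> gdist V E u w = j}"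
    proof
      fix x assume x: "x \<in> {w. E (g v) w \<and> gdist V E (g u) w = j}"
      then have xV: "x \<in> V" using EV2 by blast
      define w where "w = perm_inv V g x"
      have wV: "w \<in> V" using G_V[OF G_inv[OF g] xV] w_def by simp
      have gw: "g w = x" using perm_inv_r[OF g xV] w_def by simp
      have "E v w" using G_E'[OF g uv(2) wV] x gw by simp
      moreover have "gdist V E u w = j" using gdist_G[OF g uv(1) wV] x gw by simp
      ultimately show "x \<in> g ` {w. E v w \<and> gdist V E u w = j}" using gw by blast
    qed
  qed
  have "inj_on g {w. E v w \<and> gdist V E u w = j}"
    using G_bij[OF g] bij_betw_imp_inj_on EV2 by (metis (no_types, lifting) inj_on_subset mem_Collect_eq subsetI)
  then show ?thesis unfolding eq by (rule card_image)
qed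

lemma cn_eq: assumes "x \<in> V" shows "{w. E y w \<and> gdist V E x w = 1} = {w. E x w \<and> E w y}"
proof -
  have "gdist V E x w = 1 \<longleftrightarrow> E x w" if "E y w" for w
    using that EV2 gdist_1[OF assms] gdist_E by blast
  then show ?thesis using Esym by blast
qed

lemma V_ne: "V \<noteq> {}" using conn by (simp add: connected_graph_def)

lemma mate: assumes "x \<in> V" shows "\<exists>y\<in>orbit N x. y \<noteq> x"
proof (rule ccontr)
  assume "\<not> ?thesis"
  then have "orbit N x \<subseteq> {x}" by blast
  then have "card (orbit N x) \<le> 1" using card_mono[of "{x}"] by simp
  then show False using orbits_m assms m_ge by simp
qed

lemma odd_side: assumes "x \<in> V" "y \<in> V" "odd (gdist V E x y)" shows "x \<in> X \<longleftrightarrow> y \<notin> X"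
  using parity_gdist[OF bipX assms(1,2)] assms(3) by blast

lemma even_side: assumes "x \<in> V" "y \<in> V" "even (gdist V E x y)" shows "x \<in> X \<longleftrightarrow> y \<in> X"
  using parity_gdist[OF bipX assms(1,2)] assms(3) by blast

lemma no_girth5: "\<not> has_girth V E 5"
proof
  assume "has_girth V E 5"
  then obtain xs where xs: "cycle V E xs" "length xs = 5" unfolding has_girth_def by blast
  then have w: "walk V E xs" "E (last xs) (hd xs)" unfolding cycle_def by auto
  have p: "\<forall>i<4. E (xs ! i) (xs ! Suc i)" using w xs unfolding walk_nth by auto
  have "(xs ! 0 \<in> X \<longleftrightarrow> xs ! 4 \<in> X) \<longleftrightarrow> even (4::nat)"
    using parity_path[OF bipX p] .
  moreover have "last xs = xs ! 4" "hd xs = xs ! 0" using xs w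
    by (auto simp: last_conv_nth hd_conv_nth walk_def)
  ultimately show False using bip[OF w(2)] by simp
qed

lemma girth4: "has_girth V E 4" using girth no_girth5 by blast

lemma X_V: "X \<subseteq> V" unfolding X_def using inQ orbit_V LRu by blast

lemma bipartite: "bipartite V E"
  unfolding bipartite_def using X_V bipX by blast

lemma finD: "finite {gdist V E u v |u v. u \<in> V \<and> v \<in> V}"
  using finite_image_set2[of "\<lambda>u. u \<in> V" "\<lambda>v. v \<in> V" "gdist V E"] finV by simp

lemma diam_ge: "diam V E \<ge> 4"
proof -
  obtain u where u: "u \<in> V" using V_ne by blast
  obtain u' where u': "u' \<in> orbit N u" "u' \<noteq> u" using mate u by blast
  have "u' \<in> V" using u' orbit_V u by blast
  then have "gdist V E u u' \<in> {gdist V E u v |u v. u \<in> V \<and> v \<in> V}" using u by blast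
  then have "gdist V E u u' \<le> diam V E" unfolding diam_def using finD by simp
  then show ?thesis using far[OF u u'] by simp
qed

end

locale dtcase = setting +
  assumes DT4: "distance_transitive_upto V E G 4"
begin

lemma TD: assumes "i \<le> 4" "u \<in> V" "v \<in> V" "x \<in> V" "y \<in> V" "gdist V E u v = i" "gdist V E x y = i"
  shows "\<exists>g\<in>G. g u = x \<and> g v = y"
proof -
  have "transitive_at_distance V E G i" using DT4 assms(1) unfolding distance_transitive_upto_def by blast
  then show ?thesis using assms(2-) unfolding transitive_at_distance_def by blast
qed

lemma claimS: assumes "a \<in> V" "b \<in> V" "gdist V E a b = 4" shows "b \<in> orbit N a"
proof (rule ccontr)
  assume nb: "b \<notin> orbit N a"
  have noS: "y \<notin> orbit N x" if xy: "x \<in> V" "y \<in> V" "gdist V E x y = 4" for x y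
  proof
    assume "y \<in> orbit N x"
    obtain g where g: "g \<in> G" "g x = a" "g y = b" using TD[of 4 x y a b] xy assms by auto
    have "g y \<in> orbit N (g x)" using orbit_G[OF g(1) xy(1) \<open>y \<in> orbit N x\<close>] .
    then show False using g nb by simp
  qed
  obtain u where u: "u \<in> V" using V_ne by blast
  obtain u' where u': "u' \<in> orbit N u" "u' \<noteq> u" using mate u by blast
  have u'V: "u' \<in> V" using u' orbit_V u by blast
  have d4: "gdist V E u u' \<ge> 4" using far[OF u u'] .
  obtain p where p: "p 0 = u" "p (gdist V E u u') = u'"
     "\<forall>i\<le>gdist V E u u'. p i \<in> V \<and> gdist V E u (p i) = i"
     "\<forall>i<gdist V E u u'. E (p i) (p (Suc i))"
    using geo_path[OF u u'V] by blast
  have p3: "p 3 \<in> V" "gdist V E u (p 3) = 3" using p(3) d4 by auto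
  have side: "p 3 \<in> X \<longleftrightarrow> u \<notin> X" using odd_side[OF u p3(1)] p3(2) by auto
  obtain z where z: "z \<in> orbit N u" "E (p 3) z" using cover_ex[OF p3(1) u side] by blast
  have zV: "z \<in> V" using z EV2 by blast
  have le: "gdist V E u z \<le> 4" using gdist_step(1)[OF u z(2)] p3 by simp
  show False
  proof (cases "z = u")
    case True
    then have "gdist V E u (p 3) = 1" using gdist_E Esym z(2) by blast
    then show False using p3 by simp
  next
    case False
    then have "gdist V E u z = 4" using far[OF u z(1)] le by simp
    then show False using noS[OF u zV] z by blast
  qed
qed

lemma c2_exists: "\<exists>c. c \<ge> 2 \<and> (\<forall>x\<in>V. \<forall>y\<in>V. gdist V E x y = 2 \<longrightarrow> card {w. E y w \<and> gdist V E x w = 1} = c)"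
proof -
  obtain xs where xs: "cycle V E xs" "length xs = 4" using girth4 unfolding has_girth_def by blast
  then have w: "walk V E xs" "E (last xs) (hd xs)" "distinct xs" unfolding cycle_def by auto
  have ed: "\<forall>i<3. E (xs ! i) (xs ! Suc i)" using w xs unfolding walk_nth by auto
  have "last xs = xs ! 3" "hd xs = xs ! 0" using xs w
    by (auto simp: last_conv_nth hd_conv_nth walk_def)
  then have e30: "E (xs ! 3) (xs ! 0)" using w by simp
  define a b c d where "a = xs ! 0" "b = xs ! 1" "c = xs ! 2" "d = xs ! 3"
  have "E (xs ! 0) (xs ! Suc 0)" "E (xs ! 1) (xs ! Suc 1)" "E (xs ! 2) (xs ! Suc 2)"
    using ed[rule_format, of 0] ed[rule_format, of 1] ed[rule_format, of 2] by simp_all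
  then have eab: "E a b" "E b c" "E c d" "E d a" using e30 unfolding a_b_c_d_def by (simp_all add: eval_nat_numeral)
  have "xs ! 0 \<noteq> xs ! 2" "xs ! 1 \<noteq> xs ! 3" using w(3) xs by (simp_all add: nth_eq_iff_index_eq)
  then have dist: "a \<noteq> c" "b \<noteq> d" unfolding a_b_c_d_def by auto
  have V: "a \<in> V" "b \<in> V" "c \<in> V" "d \<in> V" using eab EV1 by auto
  have dac: "gdist V E a c = 2"
  proof -
    have "gdist V E a c \<le> 2" using gdist_step(1)[OF V(1) eab(2)] gdist_E[OF eab(1)] by simp
    moreover have "gdist V E a c \<noteq> 0" using gdist_0 V dist by blast
    moreover have "gdist V E a c \<noteq> 1"
    proof
      assume "gdist V E a c = 1"
      then have "E a c" using gdist_1 V by blast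
      then have "a \<in> X \<longleftrightarrow> c \<notin> X" by (rule bip)
      moreover have "a \<in> X \<longleftrightarrow> b \<notin> X" using eab(1) by (rule bip)
      moreover have "b \<in> X \<longleftrightarrow> c \<notin> X" using eab(2) by (rule bip)
      ultimately show False by simp
    qed
    ultimately show ?thesis by linarith
  qed
  define k where "k = card {w. E c w \<and> gdist V E a w = 1}"
  have "E c b" "E c d" using eab Esym by auto
  moreover have "gdist V E a b = 1" "gdist V E a d = 1" using eab gdist_E Esym by auto
  ultimately have "{b, d} \<subseteq> {w. E c w \<and> gdist V E a w = 1}" by simp
  moreover have "finite {w. E c w \<and> gdist V E a w = 1}"
    using fin_nbr[of c] by (rule finite_subset[rotated]) blast
  ultimately have "card {b, d} \<le> k" unfolding k_def by (rule card_mono[rotated])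
  then have k2: "k \<ge> 2" using dist by simp
  have "card {w. E y w \<and> gdist V E x w = 1} = k"
    if xy: "x \<in> V" "y \<in> V" "gdist V E x y = 2" for x y
  proof -
    obtain g where g: "g \<in> G" "g a = x" "g c = y" using TD[of 2 a c x y] xy V dac by auto
    show ?thesis using transport[OF g(1) V(1) V(3), of 1] g k_def by simp
  qed
  then show ?thesis using k2 by (intro exI[of _ k]) simp
qed

end

locale dtcase2 = dtcase +
  fixes c2 :: nat
  assumes c2_ge: "c2 \<ge> 2"
    and c2_def: "\<forall>x\<in>V. \<forall>y\<in>V. gdist V E x y = 2 \<longrightarrow> card {w. E y w \<and> gdist V E x w = 1} = c2"
begin

lemma c2': "x \<in> V \<Longrightarrow> y \<in> V \<Longrightarrow> gdist V E x y = 2 \<Longrightarrow> card {w. E y w \<and> gdist V E x w = 1} = c2"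
  using c2_def by blast

lemma bound4: assumes "u \<in> V" "v \<in> V" shows "gdist V E u v \<le> 4"
proof (rule ccontr)
  assume "\<not> ?thesis"
  then have d5: "gdist V E u v \<ge> 5" by simp
  obtain p where p: "p 0 = u" "p (gdist V E u v) = v"
     "\<forall>i\<le>gdist V E u v. p i \<in> V \<and> gdist V E u (p i) = i"
     "\<forall>i<gdist V E u v. E (p i) (p (Suc i))"
    using geo_path[OF assms] by blast
  have pV: "p 3 \<in> V" "p 4 \<in> V" "p 5 \<in> V" using p(3) d5 by auto
  have pd: "gdist V E u (p 3) = 3" "gdist V E u (p 4) = 4" "gdist V E u (p 5) = 5" using p(3) d5 by auto
  have "(3::nat) < gdist V E u v" "(4::nat) < gdist V E u v" using d5 by auto
  then have pe: "E (p 3) (p (Suc 3))" "E (p 4) (p (Suc 4))" using p(4) by blast+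
  then have pe: "E (p 3) (p 4)" "E (p 4) (p 5)" by (simp_all add: eval_nat_numeral)
  have d35: "gdist V E (p 3) (p 5) = 2"
  proof -
    have "gdist V E (p 3) (p 5) \<le> 2" using gdist_step(1)[OF pV(1) pe(2)] gdist_E[OF pe(1)] by simp
    moreover have "gdist V E (p 3) (p 5) \<noteq> 0"
    proof
      assume "gdist V E (p 3) (p 5) = 0"
      then have "p 3 = p 5" using gdist_0[OF pV(1) pV(3)] by blast
      then show False using pd by simp
    qed
    moreover have "gdist V E (p 3) (p 5) \<noteq> 1"
    proof
      assume "gdist V E (p 3) (p 5) = 1"
      then have "E (p 3) (p 5)" using gdist_1 pV by blast
      then show False using gdist_step(1)[OF assms(1), of "p 3" "p 5"] pd by simp
    qed
    ultimately show ?thesis by linarith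
  qed
  have cc: "card {w. E (p 5) w \<and> gdist V E (p 3) w = 1} = c2" using c2'[OF pV(1) pV(3) d35] .
  have p4in: "p 4 \<in> {w. E (p 5) w \<and> gdist V E (p 3) w = 1}" using pe Esym gdist_E by blast
  obtain w where w: "w \<in> {w. E (p 5) w \<and> gdist V E (p 3) w = 1}" "w \<noteq> p 4"
  proof (rule ccontr)
    assume "\<not> thesis"
    then have "{w. E (p 5) w \<and> gdist V E (p 3) w = 1} \<subseteq> {p 4}" using that by blast
    then have "card {w. E (p 5) w \<and> gdist V E (p 3) w = 1} \<le> 1" using card_mono[of "{p 4}"] by simp
    then show False using cc c2_ge by simp
  qed
  have wV: "w \<in> V" using w EV2 by blast
  have e3w: "E (p 3) w" using w gdist_1[OF pV(1) wV] by blast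
  have "gdist V E u w \<le> 4" using gdist_step(1)[OF assms(1) e3w] pd by simp
  moreover have "gdist V E u (p 5) \<le> gdist V E u w + 1" using gdist_step(1)[OF assms(1), of w "p 5"] w Esym by blast
  ultimately have dw: "gdist V E u w = 4" using pd by simp
  have o1: "w \<in> orbit N u" using claimS[OF assms(1) wV dw] .
  have o2: "p 4 \<in> orbit N u" using claimS[OF assms(1) pV(2) pd(2)] .
  have side: "p 3 \<in> X \<longleftrightarrow> u \<notin> X" using odd_side[OF assms(1) pV(1)] pd by auto
  have "w = p 4" using cover_uniq[OF pV(1) assms(1) side o1 e3w o2 pe(1)] .
  then show False using w by simp
qed

lemma diam4: "diam V E = 4"
proof -
  obtain u where u: "u \<in> V" using V_ne by blast
  then have ne: "{gdist V E u v |u v. u \<in> V \<and> v \<in> V} \<noteq> {}" by blast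
  have "diam V E \<le> 4" unfolding diam_def using finD bound4 ne
    by (subst Max_le_iff) auto
  then show ?thesis using diam_ge by simp
qed

lemma dist2: assumes "x \<in> V" "y \<in> V" "x \<in> X \<longleftrightarrow> y \<in> X" "y \<notin> orbit N x"
  shows "gdist V E x y = 2"
proof -
  have ev: "even (gdist V E x y)" using parity_gdist[OF bipX assms(1,2)] assms(3) by blast
  have "gdist V E x y \<noteq> 0" using gdist_0[OF assms(1,2)] assms(4) orbit_self by blast
  moreover have "gdist V E x y \<noteq> 4" using claimS[OF assms(1,2)] assms(4) by blast
  moreover have "gdist V E x y \<le> 4" using bound4 assms by blast
  moreover have "gdist V E x y \<noteq> 1" "gdist V E x y \<noteq> 3" using ev by auto
  ultimately show ?thesis by linarith
qed

lemma dist4: assumes "x \<in> V" "y \<in> orbit N x" "y \<noteq> x" shows "gdist V E x y = 4"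
proof -
  have "y \<in> V" using assms orbit_V by blast
  then show ?thesis using far[OF assms] bound4[OF assms(1) \<open>y \<in> V\<close>] by simp
qed

end

context dtcase2 begin

lemma r_eq: "r = m * c2"
proof -
  obtain u where u: "u \<in> V" using V_ne by blast
  define S where "S = (if u \<in> X then L else R)"
  have S: "S \<subseteq> L \<union> R" "card S = r" "orbit N u \<in> S"
    using cL cR inX[OF u] notinX[OF u] unfolding S_def by auto
  obtain B' where B': "B' \<in> S" "B' \<noteq> orbit N u"
  proof (rule ccontr)
    assume "\<not> thesis"
    then have "S \<subseteq> {orbit N u}" using that by blast
    then have "card S \<le> 1" using card_mono[of "{orbit N u}"] by simp
    then show False using S r_ge by simp
  qed
  obtain w0 where w0: "w0 \<in> V" "B' = orbit N w0" using inQ B' S by blast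
  have w0side: "w0 \<in> X \<longleftrightarrow> u \<in> X"
  proof (cases "u \<in> X")
    case True then have "B' \<in> L" using B' S_def by simp
    then show ?thesis using inX[OF w0(1)] w0 True by simp
  next
    case False then have "B' \<in> R" using B' S_def by simp
    then show ?thesis using notinX[OF w0(1)] w0 False by simp
  qed
  have B'V: "B' \<subseteq> V" using orbit_V w0 by blast
  have finB': "finite B'" using B'V finV finite_subset by blast
  define P where "P = (SIGMA v:{v. E u v}. {w \<in> B'. E v w})"
  define P' where "P' = (SIGMA w:B'. {v. E u v \<and> E v w})"
  have c1: "card P = r"
  proof -
    have "\<forall>v\<in>{v. E u v}. finite {w \<in> B'. E v w}" using finB' by simp
    then have "card P = (\<Sum>v\<in>{v. E u v}. card {w \<in> B'. E v w})"
      unfolding P_def using fin_nbr by (simp only: card_SigmaI)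
    also have "\<dots> = (\<Sum>v\<in>{v. E u v}. 1)"
    proof (rule sum.cong)
      fix v assume "v \<in> {v. E u v}"
      then have v: "E u v" by simp
      have vV: "v \<in> V" using v EV2 by blast
      have "v \<in> X \<longleftrightarrow> w0 \<notin> X" using bip[OF v] w0side by simp
      then show "card {w \<in> B'. E v w} = 1" using cover1[OF vV w0(1)] w0 by simp
    qed simp
    also have "\<dots> = r" using valency[OF u] by simp
    finally show ?thesis .
  qed
  have c2': "card P' = m * c2"
  proof -
    have fin: "\<forall>w\<in>B'. finite {v. E u v \<and> E v w}"
      using fin_nbr[of u] by (auto intro: finite_subset[rotated])
    have "card P' = (\<Sum>w\<in>B'. card {v. E u v \<and> E v w})"
      unfolding P'_def using finB' fin by (simp only: card_SigmaI)
    also have "\<dots> = (\<Sum>w\<in>B'. c2)"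
    proof (rule sum.cong)
      fix w assume w: "w \<in> B'"
      have wV: "w \<in> V" using w B'V by blast
      have ow: "orbit N w = B'" using orbit_eq[OF w0(1)] w w0 by blast
      have wside: "u \<in> X \<longleftrightarrow> w \<in> X" using same_side[OF w0(1)] w w0 w0side by blast
      have "w \<notin> orbit N u"
      proof
        assume "w \<in> orbit N u"
        then have "orbit N w = orbit N u" using orbit_eq[OF u] by blast
        then show False using ow B' by simp
      qed
      then have "gdist V E u w = 2" using dist2[OF u wV wside] by simp
      then have "card {v. E w v \<and> gdist V E u v = 1} = c2" using c2'[OF u wV] by simp
      then show "card {v. E u v \<and> E v w} = c2" using cn_eq[OF u, of w] by simp
    qed simp
    also have "\<dots> = m * c2" using orbits_m w0 by simp
    finally show ?thesis .
  qed
  have "P' = prod.swap ` P" unfolding P_def P'_def by auto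
  moreover have "inj_on prod.swap P"
  proof (rule inj_onI)
    fix x y assume "prod.swap x = prod.swap y" then show "x = y" by (metis swap_swap)
  qed
  ultimately have "card P' = card P" by (simp add: card_image)
  then show ?thesis using c1 c2' by simp
qed

lemma c2_le: "c2 \<le> r" using r_eq m_ge by simp

lemma nbrV: "E v w \<Longrightarrow> w \<in> V" using EV2 by blast

lemma arr0: assumes u: "u \<in> V" shows "card {w. E u w \<and> gdist V E u w = Suc 0} = r"
proof -
  have "{w. E u w \<and> gdist V E u w = Suc 0} = {w. E u w}" using gdist_E by auto
  then show ?thesis using valency[OF u] by simp
qed

lemma arr1: assumes u: "u \<in> V" "v \<in> V" "gdist V E u v = 1"
  shows "card {w. E v w \<and> gdist V E u w = 2} = r - 1" "card {w. E v w \<and> gdist V E u w = 0} = 1"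
proof -
  have uv: "E u v" using gdist_1 u by blast
  have "{w. E v w \<and> gdist V E u w = 0} = {u}"
    using gdist_0[OF u(1)] gdist_refl[OF u(1)] uv Esym nbrV by blast
  then show "card {w. E v w \<and> gdist V E u w = 0} = 1" by simp
  have eq: "{w. E v w \<and> gdist V E u w = 2} = {w. E v w} - {u}"
  proof
    show "{w. E v w \<and> gdist V E u w = 2} \<subseteq> {w. E v w} - {u}" using gdist_refl[OF u(1)] by auto
    show "{w. E v w} - {u} \<subseteq> {w. E v w \<and> gdist V E u w = 2}"
    proof
      fix w assume w: "w \<in> {w. E v w} - {u}"
      then have vw: "E v w" "w \<noteq> u" by auto
      have wV: "w \<in> V" using nbrV vw by blast
      have "u \<in> X \<longleftrightarrow> w \<in> X" using bip[OF uv] bip[OF vw(1)] by simp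
      then have ev: "even (gdist V E u w)" using parity_gdist[OF bipX u(1) wV] by simp
      have le: "gdist V E u w \<le> 2" using gdist_step(1)[OF u(1) vw(1)] u by simp
      have "gdist V E u w \<noteq> 0" using gdist_0[OF u(1) wV] vw by auto
      moreover have "gdist V E u w \<noteq> 1" using ev by auto
      ultimately show "w \<in> {w. E v w \<and> gdist V E u w = 2}" using le vw by simp
    qed
  qed
  have "u \<in> {w. E v w}" using uv Esym by simp
  then show "card {w. E v w \<and> gdist V E u w = 2} = r - 1"
    unfolding eq using valency[OF u(2)] fin_nbr by (simp add: card_Diff_singleton)
qed

lemma arr2: assumes u: "u \<in> V" "v \<in> V" "gdist V E u v = 2"
  shows "card {w. E v w \<and> gdist V E u w = 3} = r - c2" "card {w. E v w \<and> gdist V E u w = 1} = c2"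
proof -
  show c: "card {w. E v w \<and> gdist V E u w = 1} = c2" using c2' u by blast
  have eq: "{w. E v w \<and> gdist V E u w = 3} = {w. E v w} - {w. E v w \<and> gdist V E u w = 1}"
  proof
    show "{w. E v w \<and> gdist V E u w = 3} \<subseteq> {w. E v w} - {w. E v w \<and> gdist V E u w = 1}" by auto
    show "{w. E v w} - {w. E v w \<and> gdist V E u w = 1} \<subseteq> {w. E v w \<and> gdist V E u w = 3}"
    proof
      fix w assume w: "w \<in> {w. E v w} - {w. E v w \<and> gdist V E u w = 1}"
      then have vw: "E v w" "gdist V E u w \<noteq> 1" by auto
      have wV: "w \<in> V" using nbrV vw by blast
      have "u \<in> X \<longleftrightarrow> v \<in> X" using even_side[OF u(1,2)] u(3) by simp
      then have "u \<in> X \<longleftrightarrow> w \<notin> X" using bip[OF vw(1)] by simp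
      then have od: "odd (gdist V E u w)" using parity_gdist[OF bipX u(1) wV] by simp
      have le: "gdist V E u w \<le> 3" using gdist_step(1)[OF u(1) vw(1)] u by simp
      have "gdist V E u w \<noteq> 2" using od by auto
      moreover have "gdist V E u w \<noteq> 0"
      proof
        assume "gdist V E u w = 0" then show False using od by simp
      qed
      ultimately show "w \<in> {w. E v w \<and> gdist V E u w = 3}" using le vw by simp
    qed
  qed
  show "card {w. E v w \<and> gdist V E u w = 3} = r - c2"
    unfolding eq using valency[OF u(2)] fin_nbr c by (subst card_Diff_subset) auto
qed

lemma arr3: assumes u: "u \<in> V" "v \<in> V" "gdist V E u v = 3"
  shows "card {w. E v w \<and> gdist V E u w = 4} = 1" "card {w. E v w \<and> gdist V E u w = 2} = r - 1"
proof -
  have side: "v \<in> X \<longleftrightarrow> u \<notin> X" using odd_side[OF u(1,2)] u(3) by auto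
  obtain b where b: "b \<in> orbit N u" "E v b" using cover_ex[OF u(2) u(1) side] by blast
  have bV: "b \<in> V" using nbrV b by blast
  have bu: "b \<noteq> u"
  proof
    assume "b = u"
    then have "gdist V E u v = 1" using gdist_E Esym b by blast
    then show False using u by simp
  qed
  have db: "gdist V E u b = 4" using dist4[OF u(1) b(1) bu] .
  have eq4: "{w. E v w \<and> gdist V E u w = 4} = {b}"
  proof
    show "{b} \<subseteq> {w. E v w \<and> gdist V E u w = 4}" using b db by simp
    show "{w. E v w \<and> gdist V E u w = 4} \<subseteq> {b}"
    proof
      fix w assume w: "w \<in> {w. E v w \<and> gdist V E u w = 4}"
      then have "w \<in> orbit N u" using claimS[OF u(1)] nbrV by blast
      then show "w \<in> {b}" using cover_uniq[OF u(2) u(1) side] b w by blast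
    qed
  qed
  then show "card {w. E v w \<and> gdist V E u w = 4} = 1" by simp
  have eq2: "{w. E v w \<and> gdist V E u w = 2} = {w. E v w} - {b}"
  proof
    show "{w. E v w \<and> gdist V E u w = 2} \<subseteq> {w. E v w} - {b}" using db by auto
    show "{w. E v w} - {b} \<subseteq> {w. E v w \<and> gdist V E u w = 2}"
    proof
      fix w assume w: "w \<in> {w. E v w} - {b}"
      then have vw: "E v w" "w \<noteq> b" by auto
      have wV: "w \<in> V" using nbrV vw by blast
      have "u \<in> X \<longleftrightarrow> w \<in> X" using side bip[OF vw(1)] by simp
      then have ev: "even (gdist V E u w)" using parity_gdist[OF bipX u(1) wV] by simp
      have le: "gdist V E u w \<le> 4" using gdist_step(1)[OF u(1) vw(1)] u by simp
      have ge: "gdist V E u w \<ge> 2" using gdist_step(2)[OF u(1) vw(1)] u by simp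
      have "gdist V E u w \<noteq> 4" using eq4 vw by blast
      moreover have "gdist V E u w \<noteq> 3" using ev by auto
      ultimately show "w \<in> {w. E v w \<and> gdist V E u w = 2}" using le ge vw by simp
    qed
  qed
  show "card {w. E v w \<and> gdist V E u w = 2} = r - 1"
    unfolding eq2 using valency[OF u(2)] fin_nbr b by (simp add: card_Diff_singleton)
qed

lemma arr4: assumes u: "u \<in> V" "v \<in> V" "gdist V E u v = 4"
  shows "card {w. E v w \<and> gdist V E u w = 3} = r"
proof -
  have eq: "{w. E v w \<and> gdist V E u w = 3} = {w. E v w}"
  proof
    show "{w. E v w} \<subseteq> {w. E v w \<and> gdist V E u w = 3}"
    proof
      fix w assume "w \<in> {w. E v w}"
      then have vw: "E v w" by simp
      have wV: "w \<in> V" using nbrV vw by blast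
      have "u \<in> X \<longleftrightarrow> v \<in> X" using even_side[OF u(1,2)] u(3) by simp
      then have "u \<in> X \<longleftrightarrow> w \<notin> X" using bip[OF vw] by simp
      then have od: "odd (gdist V E u w)" using parity_gdist[OF bipX u(1) wV] by simp
      have le: "gdist V E u w \<le> 4" using bound4 u wV by blast
      have ge: "gdist V E u w \<ge> 3" using gdist_step(2)[OF u(1) vw] u by simp
      have "gdist V E u w \<noteq> 4" using od by auto
      then show "w \<in> {w. E v w \<and> gdist V E u w = 3}" using le ge vw by simp
    qed
  qed auto
  then show ?thesis using valency[OF u(2)] by simp
qed

lemma int_array: "has_intersection_array V E [r, r - 1, r - c2, 1] [1, c2, r - 1, r]"
  unfolding has_intersection_array_def Let_def diam4
proof (intro conjI ballI)
  show "connected_graph V E" using conn .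
  fix u v assume uv: "u \<in> V" "v \<in> V"
  have le: "gdist V E u v \<le> 4" using bound4 uv by blast
  show "gdist V E u v < 4 \<longrightarrow>
          card {w. E v w \<and> gdist V E u w = Suc (gdist V E u v)} = [r, r - 1, r - c2, 1] ! gdist V E u v"
  proof
    assume "gdist V E u v < 4"
    then consider "gdist V E u v = 0" | "gdist V E u v = 1" | "gdist V E u v = 2" | "gdist V E u v = 3" by linarith
    then show "card {w. E v w \<and> gdist V E u w = Suc (gdist V E u v)} = [r, r - 1, r - c2, 1] ! gdist V E u v"
    proof cases
      case 1 then have "v = u" using gdist_0 uv by blast
      then show ?thesis using arr0 uv 1 by simp
    next
      case 2 then show ?thesis using arr1(1)[OF uv] by (simp add: numeral_2_eq_2)
    next
      case 3 then show ?thesis using arr2(1)[OF uv] by (simp add: eval_nat_numeral)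
    next
      case 4 then show ?thesis using arr3(1)[OF uv] by (simp add: eval_nat_numeral)
    qed
  qed
  show "1 \<le> gdist V E u v \<longrightarrow>
          card {w. E v w \<and> gdist V E u w = gdist V E u v - 1} = [1, c2, r - 1, r] ! (gdist V E u v - 1)"
  proof
    assume "1 \<le> gdist V E u v"
    then consider "gdist V E u v = 1" | "gdist V E u v = 2" | "gdist V E u v = 3" | "gdist V E u v = 4"
      using le by linarith
    then show "card {w. E v w \<and> gdist V E u w = gdist V E u v - 1} = [1, c2, r - 1, r] ! (gdist V E u v - 1)"
    proof cases
      case 1 then show ?thesis using arr1(2)[OF uv] by simp
    next
      case 2 then show ?thesis using arr2(2)[OF uv] by simp
    next
      case 3 then show ?thesis using arr3(2)[OF uv] by (simp add: eval_nat_numeral)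
    next
      case 4 then show ?thesis using arr4[OF uv] by (simp add: eval_nat_numeral)
    qed
  qed
qed simp_all

end

context dtcase2 begin

lemma anti_rel: assumes "u \<in> V" "v \<in> V" shows "antipodal_rel V E u v \<longleftrightarrow> v \<in> orbit N u"
proof
  assume "antipodal_rel V E u v"
  then have "gdist V E u v = 0 \<or> gdist V E u v = 4" unfolding antipodal_rel_def diam4 .
  then show "v \<in> orbit N u" using gdist_0[OF assms] orbit_self claimS[OF assms] by blast
next
  assume v: "v \<in> orbit N u"
  show "antipodal_rel V E u v"
  proof (cases "v = u")
    case True then show ?thesis using gdist_refl assms unfolding antipodal_rel_def by simp
  next
    case False then show ?thesis using dist4[OF assms(1) v] unfolding antipodal_rel_def diam4 by simp
  qed
qed

lemma anti: "antipodal V E"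
  unfolding antipodal_def
proof (intro ballI impI)
  fix u v w assume V: "u \<in> V" "v \<in> V" "w \<in> V" and r: "antipodal_rel V E u v \<and> antipodal_rel V E v w"
  then have "v \<in> orbit N u" "w \<in> orbit N v" using anti_rel by auto
  then have "w \<in> orbit N u" using orbit_eq[OF V(1)] by blast
  then show "antipodal_rel V E u w" using anti_rel V by simp
qed

lemma anti_classes: "antipodal_classes V E = orbit N ` V"
  unfolding antipodal_classes_def
proof (rule image_cong[OF refl])
  fix u assume u: "u \<in> V"
  show "{v \<in> V. antipodal_rel V E u v} = orbit N u" using anti_rel[OF u] orbit_V[OF u] by blast
qed

lemma anti_cover: "antipodal_cover_Krr V E m r"
  unfolding antipodal_cover_Krr_def anti_classes
proof (intro conjI)
  show "antipodal V E" by (rule anti)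
  show "\<forall>A\<in>orbit N ` V. card A = m" using orbits_m by blast
  show "quotient_is_Krr E (orbit N ` V) r" unfolding quotient_is_Krr_def
    using LRu LRi cL cR LRadj by blast
  show "is_cover E (orbit N ` V)" by (rule cover)
qed

definition Y where "Y = \<Union>R"

lemma Y_eq: "Y = V - X"
proof
  show "Y \<subseteq> V - X"
  proof
    fix y assume "y \<in> Y"
    then obtain D where D: "D \<in> R" "y \<in> D" unfolding Y_def by blast
    obtain d where d: "d \<in> V" "D = orbit N d" using inQ D by blast
    have yV: "y \<in> V" using orbit_V d D by blast
    have "orbit N y = D" using orbit_eq[OF d(1)] d D by blast
    then show "y \<in> V - X" using notinX[OF yV] D yV by simp
  qed
  show "V - X \<subseteq> Y"
  proof
    fix y assume "y \<in> V - X"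
    then have "orbit N y \<in> R" using notinX by blast
    then show "y \<in> Y" unfolding Y_def using orbit_self by blast
  qed
qed

lemma incidence: "incidence_graph_of V E X Y"
  unfolding incidence_graph_of_def Y_eq
proof (intro conjI allI impI)
  show "X \<union> (V - X) = V" using X_V by blast
  show "X \<inter> (V - X) = {}" by blast
  fix u v assume e: "E u v"
  have "u \<in> V" "v \<in> V" using e EV1 EV2 by auto
  moreover have "u \<in> X \<longleftrightarrow> v \<notin> X" using e by (rule bip)
  ultimately show "u \<in> X \<and> v \<in> V - X \<or> u \<in> V - X \<and> v \<in> X" by blast
qed

lemma blk: assumes "y \<in> Y" shows "nbr_block E X y = {x. E y x}"
proof -
  have "y \<notin> X" using assms Y_eq by blast
  have "x \<in> X \<and> E x y \<longleftrightarrow> E y x" for x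
  proof
    assume "E y x"
    then have "x \<in> X" using bip[of y x] \<open>y \<notin> X\<close> by simp
    then show "x \<in> X \<and> E x y" using Esym \<open>E y x\<close> by simp
  qed (simp add: Esym)
  then show ?thesis unfolding nbr_block_def by simp
qed

lemma LR_orbit: assumes "C \<in> L \<union> R" shows "\<exists>c\<in>V. C = orbit N c \<and> (\<forall>x\<in>C. orbit N x = C)"
proof -
  obtain c where c: "c \<in> V" "C = orbit N c" using inQ assms by blast
  then show ?thesis using orbit_eq by blast
qed

lemma common: assumes "x \<in> V" "y \<in> V" "x \<in> X \<longleftrightarrow> y \<in> X" "y \<notin> orbit N x"
  shows "card {w. E x w \<and> E w y} = c2"
  using c2'[OF assms(1,2) dist2[OF assms]] cn_eq[OF assms(1)] by simp

lemma rgd: "RGD X L Y (nbr_block E X) R r c2 m"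
  unfolding RGD_def
proof (intro conjI)
  have finX: "finite X" using X_V finV finite_subset by blast
  then show "finite X" .
  have disjL: "pairwise disjnt L" using orbit_disj unfolding pairwise_def disjnt_def by blast
  have fin: "\<And>A. A \<in> L \<Longrightarrow> finite A" using X_V finX unfolding X_def by (meson Sup_upper finite_subset)
  have "card X = sum card L" unfolding X_def by (rule card_Union_disjoint[OF disjL fin])
  also have "\<dots> = (\<Sum>C\<in>L. m)"
  proof (rule sum.cong[OF refl])
    fix C assume "C \<in> L" then obtain c where "c \<in> V" "C = orbit N c" using inQ by blast
    then show "card C = m" using orbits_m by simp
  qed
  also have "\<dots> = r * m" using cL by simp
  finally show "card X = r * m" .
  show "\<Union>L = X" unfolding X_def ..
  show "\<forall>C\<in>L. C \<noteq> {} \<and> card C = m"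
  proof
    fix C assume "C \<in> L" then obtain c where "c \<in> V" "C = orbit N c" using inQ by blast
    then show "C \<noteq> {} \<and> card C = m" using orbits_m orbit_self by blast
  qed
  show "\<forall>C\<in>L. \<forall>D\<in>L. C \<noteq> D \<longrightarrow> C \<inter> D = {}" using orbit_disj by blast
  show "\<forall>y\<in>Y. nbr_block E X y \<subseteq> X \<and> card (nbr_block E X y) = r \<and> (\<forall>C\<in>L. card (nbr_block E X y \<inter> C) = 1)"
  proof
    fix y assume y: "y \<in> Y"
    have yV: "y \<in> V" "y \<notin> X" using y Y_eq by auto
    have b: "nbr_block E X y = {x. E y x}" using blk[OF y] .
    show "nbr_block E X y \<subseteq> X \<and> card (nbr_block E X y) = r \<and> (\<forall>C\<in>L. card (nbr_block E X y \<inter> C) = 1)"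
    proof (intro conjI ballI)
      show "nbr_block E X y \<subseteq> X" unfolding nbr_block_def by blast
      show "card (nbr_block E X y) = r" using b valency yV by simp
      fix C assume C: "C \<in> L"
      obtain c where c: "c \<in> V" "C = orbit N c" using inQ C by blast
      have "c \<in> X" using inX[OF c(1)] c C by simp
      then have "card {z \<in> orbit N c. E y z} = 1" using cover1[OF yV(1) c(1)] yV by simp
      moreover have "nbr_block E X y \<inter> C = {z \<in> orbit N c. E y z}" using b c by blast
      ultimately show "card (nbr_block E X y \<inter> C) = 1" by simp
    qed
  qed
  show "\<forall>x\<in>X. \<forall>x'\<in>X. \<not> (\<exists>C\<in>L. x \<in> C \<and> x' \<in> C) \<longrightarrow>
      card {y \<in> Y. x \<in> nbr_block E X y \<and> x' \<in> nbr_block E X y} = c2"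
  proof (intro ballI impI)
    fix x x' assume x: "x \<in> X" "x' \<in> X" and nc: "\<not> (\<exists>C\<in>L. x \<in> C \<and> x' \<in> C)"
    have xV: "x \<in> V" "x' \<in> V" using x X_V by auto
    have "orbit N x \<in> L" using inX xV x by blast
    then have no: "x' \<notin> orbit N x" using nc orbit_self by blast
    have "{y \<in> Y. x \<in> nbr_block E X y \<and> x' \<in> nbr_block E X y} = {w. E x w \<and> E w x'}"
    proof
      show "{y \<in> Y. x \<in> nbr_block E X y \<and> x' \<in> nbr_block E X y} \<subseteq> {w. E x w \<and> E w x'}"
        unfolding nbr_block_def using Esym by blast
      show "{w. E x w \<and> E w x'} \<subseteq> {y \<in> Y. x \<in> nbr_block E X y \<and> x' \<in> nbr_block E X y}"
      proof
        fix w assume w: "w \<in> {w. E x w \<and> E w x'}"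
        then have "w \<in> V" using EV2 by blast
        moreover have "w \<notin> X" using bip[of x w] w x by simp
        ultimately have "w \<in> V" "w \<notin> X" by simp_all
        then show "w \<in> {y \<in> Y. x \<in> nbr_block E X y \<and> x' \<in> nbr_block E X y}"
          using w x Y_eq Esym unfolding nbr_block_def by blast
      qed
    qed
    then show "card {y \<in> Y. x \<in> nbr_block E X y \<and> x' \<in> nbr_block E X y} = c2"
      using common[OF xV] x no by simp
  qed
  show "\<Union>R = Y" unfolding Y_def ..
  show "\<forall>\<pi>\<in>R. \<pi> \<noteq> {}" using inQ orbit_self by blast
  show "\<forall>\<pi>\<in>R. \<forall>\<rho>\<in>R. \<pi> \<noteq> \<rho> \<longrightarrow> \<pi> \<inter> \<rho> = {}" using orbit_disj by blast
  show "\<forall>\<pi>\<in>R. \<forall>x\<in>X. \<exists>!y. y \<in> \<pi> \<and> x \<in> nbr_block E X y"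
  proof (intro ballI)
    fix \<pi> x assume p: "\<pi> \<in> R" and x: "x \<in> X"
    obtain c where c: "c \<in> V" "\<pi> = orbit N c" using inQ p by blast
    have xV: "x \<in> V" using x X_V by blast
    have side: "x \<in> X \<longleftrightarrow> c \<notin> X" using notinX[OF c(1)] c p x by simp
    obtain y where y: "y \<in> orbit N c" "E x y" using cover_ex[OF xV c(1) side] by blast
    show "\<exists>!y. y \<in> \<pi> \<and> x \<in> nbr_block E X y"
    proof (rule ex1I[of _ y])
      show "y \<in> \<pi> \<and> x \<in> nbr_block E X y" using y c x unfolding nbr_block_def by simp
      fix y' assume "y' \<in> \<pi> \<and> x \<in> nbr_block E X y'"
      then have "y' \<in> orbit N c" "E x y'" using c unfolding nbr_block_def by auto
      then show "y' = y" using cover_uniq[OF xV c(1) side] y by blast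
    qed
  qed
qed

lemma blocks: "\<forall>\<pi>\<in>R. \<forall>\<rho>\<in>R. \<pi> \<noteq> \<rho> \<longrightarrow>
   (\<forall>y\<in>\<pi>. \<forall>y'\<in>\<rho>. card (nbr_block E X y \<inter> nbr_block E X y') = c2)"
proof (intro ballI impI)
  fix \<pi> \<rho> y y' assume p: "\<pi> \<in> R" "\<rho> \<in> R" "\<pi> \<noteq> \<rho>" and y: "y \<in> \<pi>" "y' \<in> \<rho>"
  have pLR: "\<pi> \<in> L \<union> R" "\<rho> \<in> L \<union> R" using p by auto
  have c: "\<forall>x\<in>\<pi>. orbit N x = \<pi>" using LR_orbit[OF pLR(1)] by blast
  have d: "\<forall>x\<in>\<rho>. orbit N x = \<rho>" using LR_orbit[OF pLR(2)] by blast
  have yY: "y \<in> Y" "y' \<in> Y" using y p unfolding Y_def by auto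
  have yV: "y \<in> V" "y' \<in> V" "y \<notin> X" "y' \<notin> X" using yY Y_eq by auto
  have no: "y' \<notin> orbit N y"
  proof
    assume "y' \<in> orbit N y"
    then have "orbit N y' = orbit N y" using orbit_eq[OF yV(1)] by blast
    moreover have "orbit N y = \<pi>" "orbit N y' = \<rho>" using c d y by auto
    ultimately show False using p(3) by simp
  qed
  have "nbr_block E X y \<inter> nbr_block E X y' = {w. E y w \<and> E w y'}"
    unfolding blk[OF yY(1)] blk[OF yY(2)] using Esym by auto
  then show "card (nbr_block E X y \<inter> nbr_block E X y') = c2"
    using common[OF yV(1,2)] yV no by simp
qed

lemma conclusion:
  "(m = 2 \<and> hadamard_graph_valency V E r)
     \<or> (\<exists>c2. distance_transitive V E G \<and> antipodal_cover_Krr V E m r \<and>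
          (\<exists>X Y P Pi. incidence_graph_of V E X Y \<and> RGD X P Y (nbr_block E X) Pi r c2 m \<and>
              (\<forall>\<pi>\<in>Pi. \<forall>\<rho>\<in>Pi. \<pi> \<noteq> \<rho> \<longrightarrow>
                 (\<forall>y\<in>\<pi>. \<forall>y'\<in>\<rho>. card (nbr_block E X y \<inter> nbr_block E X y') = c2))) \<and>
          r = m * c2 \<and>
          has_intersection_array V E [r, r - 1, r - c2, 1] [1, c2, r - 1, r] \<and>
          c2 \<ge> 2 \<and> m \<ge> 3)"
proof (cases "m = 2")
  case True
  have "r = 2 * c2" using r_eq True by simp
  moreover have "has_intersection_array V E [2*c2, 2*c2 - 1, c2, 1] [1, c2, 2*c2 - 1, 2*c2]"
    using int_array \<open>r = 2 * c2\<close> by simp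
  ultimately have "hadamard_graph_valency V E r" unfolding hadamard_graph_valency_def by blast
  then show ?thesis using True by blast
next
  case False
  then have m3: "m \<ge> 3" using m_ge by simp
  have dt: "distance_transitive V E G" unfolding distance_transitive_def diam4 by (rule DT4)
  have ex: "\<exists>X Y P Pi. incidence_graph_of V E X Y \<and> RGD X P Y (nbr_block E X) Pi r c2 m \<and>
              (\<forall>\<pi>\<in>Pi. \<forall>\<rho>\<in>Pi. \<pi> \<noteq> \<rho> \<longrightarrow>
                 (\<forall>y\<in>\<pi>. \<forall>y'\<in>\<rho>. card (nbr_block E X y \<inter> nbr_block E X y') = c2))"
    by (intro exI[of _ X] exI[of _ Y] exI[of _ L] exI[of _ R] conjI incidence rgd blocks)
  show ?thesis
    by (intro disjI2 exI[of _ c2] conjI dt anti_cover ex r_eq int_array c2_ge m3)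
qed

end

theorem lemma5p10:
  fixes V :: "'a set" and E :: "'a \<Rightarrow> 'a \<Rightarrow> bool"
    and G N :: "('a \<Rightarrow> 'a) set" and m r :: nat
  assumes graph: "simple_graph V E" and conn: "connected_graph V E"
    and GT: "geodesic_transitive V E G 3"
    and girth: "has_girth V E 4 \<or> has_girth V E 5"
    and G_aut: "aut_subgroup V E G"
    and N_normal: "normal_subgroup V N G"
    and orbits_m: "\<forall>x\<in>V. card (orbit N x) = m" and m_ge: "m \<ge> 2"
    and quot: "quotient_is_Krr E (orbit N ` V) r" and r_ge: "r \<ge> 3"
    and cover: "is_cover E (orbit N ` V)"
  shows "bipartite V E \<and> has_girth V E 4 \<and> diam V E \<ge> 4 \<and>
    ((m = 2 \<and> hadamard_graph_valency V E r)
     \<or> (\<exists>c2. distance_transitive V E G \<and> antipodal_cover_Krr V E m r \<and>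
          (\<exists>X Y P Pi. incidence_graph_of V E X Y \<and> RGD X P Y (nbr_block E X) Pi r c2 m \<and>
              (\<forall>\<pi>\<in>Pi. \<forall>\<rho>\<in>Pi. \<pi> \<noteq> \<rho> \<longrightarrow>
                 (\<forall>y\<in>\<pi>. \<forall>y'\<in>\<rho>. card (nbr_block E X y \<inter> nbr_block E X y') = c2))) \<and>
          r = m * c2 \<and>
          has_intersection_array V E [r, r - 1, r - c2, 1] [1, c2, r - 1, r] \<and>
          c2 \<ge> 2 \<and> m \<ge> 3)
     \<or> \<not> distance_transitive_upto V E G 4)"
proof -
  obtain L R where LR: "L \<union> R = orbit N ` V" "L \<inter> R = {}" "card L = r" "card R = r"
    "\<forall>B\<in>orbit N ` V. \<forall>C\<in>orbit N ` V. quot_adj E B C \<longleftrightarrow> (B \<in> L \<and> C \<in> R) \<or> (B \<in> R \<and> C \<in> L)"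
    using quot unfolding quotient_is_Krr_def by blast
  have S: "setting V E G N m r L R"
    unfolding setting_def sg_def setting_axioms_def
    using graph conn GT girth G_aut N_normal orbits_m m_ge r_ge cover LR by blast
  have part1: "bipartite V E" "has_girth V E 4" "diam V E \<ge> 4"
    using setting.bipartite[OF S] setting.girth4[OF S] setting.diam_ge[OF S] by auto
  show ?thesis
  proof (cases "distance_transitive_upto V E G 4")
    case False
    then show ?thesis using part1 by simp
  next
    case True
    have D: "dtcase V E G N m r L R" unfolding dtcase_def dtcase_axioms_def using S True by blast
    obtain c where c: "c \<ge> 2"
      "\<forall>x\<in>V. \<forall>y\<in>V. gdist V E x y = 2 \<longrightarrow> card {w. E y w \<and> gdist V E x w = 1} = c"
      using dtcase.c2_exists[OF D] by blast
    have D2: "dtcase2 V E G N m r L R c" unfolding dtcase2_def dtcase2_axioms_def using D c by blast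
    show ?thesis using dtcase2.conclusion[OF D2] part1 by blast
  qed
qed

end
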